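(* Let $G$ be a finite group. Then $\Delta_D(G)$ is Eulerian (i.e. has an Eulerian circuit) if and only if $|G|$ is odd.
   Context: For a finite group $G$, let $M(G)$ denote its Schur multiplier. A Schur cover of $G$ is a group $\tilde{G}$ with a central extension $\{e\}\to M(G)\xrightarrow{\iota}\tilde{G}\xrightarrow{\pi}G\to\{e\}$ such that $\iota(M(G))\subseteq Z(\tilde{G})\cap[\tilde{G},\tilde{G}]$ and $\tilde G$ has maximal order among such extensions. The deep commuting graph $\Delta_D(G)$ is the simple graph with vertex set $G$ in which two distinct vertices are adjacent if and only if their preimages under $\pi$ commute in $\tilde{G}$ (independent of the choice of Schur cover and preimages). *)

theory Defs
  imports "HOL-Algebra.Algebra"
begin

definition grp_center :: "('a, 'm) monoid_scheme \<Rightarrow> 'a set" where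
  "grp_center H = {z \<in> carrier H. \<forall>h \<in> carrier H. z \<otimes>\<^bsub>H\<^esub> h = h \<otimes>\<^bsub>H\<^esub> z}"

definition stem_extension ::
  "('a, 'm) monoid_scheme \<Rightarrow> ('b, 'n) monoid_scheme \<Rightarrow> ('b \<Rightarrow> 'a) \<Rightarrow> bool" where
  "stem_extension G H f \<longleftrightarrow>
     group H \<and> f \<in> hom H G \<and> f ` carrier H = carrier G \<and>
     kernel H G f \<subseteq> grp_center H \<inter> derived H (carrier H)"

text \<open>A Schur cover of G: a finite stem extension of maximal order among all
  finite stem extensions of G (every finite group is isomorphic to one whose
  carrier consists of natural numbers, so comparing with groups on type nat
  covers all finite stem extensions).\<close>
definition schur_cover ::
  "('a, 'm) monoid_scheme \<Rightarrow> ('b, 'n) monoid_scheme \<Rightarrow> ('b \<Rightarrow> 'a) \<Rightarrow> bool" where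
  "schur_cover G H f \<longleftrightarrow>
     stem_extension G H f \<and> finite (carrier H) \<and>
     (\<forall>(K :: nat monoid) (rho :: nat \<Rightarrow> 'a).
        stem_extension G K rho \<and> finite (carrier K) \<longrightarrow> card (carrier K) \<le> card (carrier H))"

definition deep_adj ::
  "('a, 'm) monoid_scheme \<Rightarrow> ('b, 'n) monoid_scheme \<Rightarrow> ('b \<Rightarrow> 'a) \<Rightarrow> 'a \<Rightarrow> 'a \<Rightarrow> bool" where
  "deep_adj G H f x y \<longleftrightarrow>
     x \<in> carrier G \<and> y \<in> carrier G \<and> x \<noteq> y \<and>
     (\<forall>a \<in> carrier H. \<forall>b \<in> carrier H. f a = x \<longrightarrow> f b = y \<longrightarrow>
        a \<otimes>\<^bsub>H\<^esub> b = b \<otimes>\<^bsub>H\<^esub> a)"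

text \<open>An Eulerian circuit of the simple graph with vertex set V and (symmetric,
  irreflexive) adjacency E: a closed walk, given as the list of visited vertices
  (first = last), traversing every edge exactly once.\<close>
definition eulerian_circuit :: "'a set \<Rightarrow> ('a \<Rightarrow> 'a \<Rightarrow> bool) \<Rightarrow> 'a list \<Rightarrow> bool" where
  "eulerian_circuit V E ws \<longleftrightarrow>
     ws \<noteq> [] \<and> set ws \<subseteq> V \<and> hd ws = last ws \<and>
     (\<forall>i < length ws - 1. E (ws ! i) (ws ! Suc i)) \<and>
     distinct (map (\<lambda>i. {ws ! i, ws ! Suc i}) [0..<length ws - 1]) \<and>
     set (map (\<lambda>i. {ws ! i, ws ! Suc i}) [0..<length ws - 1])
       = {{u, v} | u v. u \<in> V \<and> v \<in> V \<and> E u v}"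

definition eulerian :: "'a set \<Rightarrow> ('a \<Rightarrow> 'a \<Rightarrow> bool) \<Rightarrow> bool" where
  "eulerian V E \<longleftrightarrow> (\<exists>ws. eulerian_circuit V E ws)"

end

theory Submission
  imports Defs
begin


fun walk_edges :: "'a list \<Rightarrow> 'a set list" where
  "walk_edges (x # y # r) = {x, y} # walk_edges (y # r)"
| "walk_edges _ = []"

lemma walk_edges_map: "map (\<lambda>i. {ws ! i, ws ! Suc i}) [0..<length ws - 1] = walk_edges ws"
proof (induction ws rule: walk_edges.induct)
  case (1 x y r)
  have "[0..<length (x # y # r) - 1] = 0 # map Suc [0..<length (y # r) - 1]"
    by (simp add: upt_conv_Cons map_Suc_upt del: upt_Suc)
  then show ?case using 1 by (simp add: o_def del: upt_Suc)
qed auto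

lemma walk_edges_length: "length (walk_edges ws) = length ws - 1"
  by (induction ws rule: walk_edges.induct) auto

lemma walk_edges_snoc: "walk_edges (xs @ [z]) = walk_edges xs @ (if xs = [] then [] else [{last xs, z}])"
  by (induction xs rule: walk_edges.induct) auto

lemma walk_edges_subset: "ed \<in> set (walk_edges ws) \<Longrightarrow> ed \<subseteq> set ws"
  by (induction ws rule: walk_edges.induct) auto

lemma walk_edges_Edges:
  assumes "successively E ws" "set ws \<subseteq> V"
  shows "set (walk_edges ws) \<subseteq> {{u, v} | u v. u \<in> V \<and> v \<in> V \<and> E u v}"
  using assms by (induction ws rule: walk_edges.induct) auto

lemma par_aux:
  fixes K N :: nat
  assumes "even (K + (if P then 1 else 0) + (if R then 1 else 0))" "N = K + (if Q \<or> P then 1 else 0)" "\<not> (Q \<and> P)"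
  shows "even (N + (if Q then 1 else 0) + (if R then 1 else 0))"
  using assms by (cases P; cases Q; cases R) auto

lemma parity:
  assumes "ws \<noteq> []" "successively E ws" "\<forall>x. \<not> E x x" "distinct (walk_edges ws)"
  shows "even (card {ed \<in> set (walk_edges ws). v \<in> ed} + (if v = hd ws then 1 else 0) + (if v = last ws then 1 else 0))"
  using assms
proof (induction ws rule: walk_edges.induct)
  case (1 x y r)
  have xy: "x \<noteq> y" using 1 by auto
  have IH: "even (card {ed \<in> set (walk_edges (y#r)). v \<in> ed} + (if v = y then 1 else 0) + (if v = last (y#r) then 1 else 0))"
    using 1 by auto
  have nin: "{x,y} \<notin> set (walk_edges (y#r))" using 1 by auto
  have fin: "finite {ed \<in> set (walk_edges (y#r)). v \<in> ed}" by auto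
  have "{ed \<in> set (walk_edges (x#y#r)). v \<in> ed} = (if v = x \<or> v = y then insert {x,y} {ed \<in> set (walk_edges (y#r)). v \<in> ed} else {ed \<in> set (walk_edges (y#r)). v \<in> ed})"
    by auto
  then have "card {ed \<in> set (walk_edges (x#y#r)). v \<in> ed} = card {ed \<in> set (walk_edges (y#r)). v \<in> ed} + (if v = x \<or> v = y then 1 else 0)"
    using nin fin by (cases "v = x \<or> v = y") simp_all
  from par_aux[OF IH this] xy show ?case by simp
next
  case "2_1" then show ?case by simp
next
  case ("2_2" u) then show ?case by simp
qed

lemma deg_card:
  assumes "v \<in> V" "\<forall>x y. E x y \<longrightarrow> E y x"
  shows "card {ed \<in> {{u, w} | u w. u \<in> V \<and> w \<in> V \<and> E u w}. v \<in> ed} = card {y \<in> V. E v y}"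
proof -
  have "bij_betw (\<lambda>y. {v, y}) {y \<in> V. E v y} {ed \<in> {{u, w} | u w. u \<in> V \<and> w \<in> V \<and> E u w}. v \<in> ed}"
    unfolding bij_betw_def
  proof
    show "inj_on (\<lambda>y. {v, y}) {y \<in> V. E v y}" by (intro inj_onI) (metis doubleton_eq_iff)
    show "(\<lambda>y. {v, y}) ` {y \<in> V. E v y} = {ed \<in> {{u, w} | u w. u \<in> V \<and> w \<in> V \<and> E u w}. v \<in> ed}"
    proof
      show "(\<lambda>y. {v, y}) ` {y \<in> V. E v y} \<subseteq> {ed \<in> {{u, w} | u w. u \<in> V \<and> w \<in> V \<and> E u w}. v \<in> ed}"
      proof (rule image_subsetI)
        fix y assume "y \<in> {y \<in> V. E v y}"
        then show "{v, y} \<in> {ed \<in> {{u, w} | u w. u \<in> V \<and> w \<in> V \<and> E u w}. v \<in> ed}"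
          using assms(1) by blast
      qed
      show "{ed \<in> {{u, w} | u w. u \<in> V \<and> w \<in> V \<and> E u w}. v \<in> ed} \<subseteq> (\<lambda>y. {v, y}) ` {y \<in> V. E v y}"
      proof
        fix ed assume "ed \<in> {ed \<in> {{u, w} | u w. u \<in> V \<and> w \<in> V \<and> E u w}. v \<in> ed}"
        then obtain u w where "ed = {u,w}" "u \<in> V" "w \<in> V" "E u w" "v \<in> ed" by auto
        then show "ed \<in> (\<lambda>y. {v, y}) ` {y \<in> V. E v y}"
        proof (cases "v = u")
          case True
          then show ?thesis using \<open>ed = {u,w}\<close> \<open>w \<in> V\<close> \<open>E u w\<close> by (intro rev_image_eqI[of w]) auto
        next
          case False
          then have "v = w" using \<open>v \<in> ed\<close> \<open>ed = {u,w}\<close> by auto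
          then show ?thesis using \<open>ed = {u,w}\<close> \<open>u \<in> V\<close> \<open>E u w\<close> assms(2)
            by (intro rev_image_eqI[of u]) auto
        qed
      qed
    qed
  qed
  then show ?thesis by (rule bij_betw_same_card[THEN sym])
qed

lemma eulerian_even:
  assumes "eulerian V E" "\<forall>x y. E x y \<longrightarrow> E y x" "\<forall>x. \<not> E x x" "v \<in> V"
  shows "even (card {y \<in> V. E v y})"
proof -
  obtain ws where ws: "eulerian_circuit V E ws" using assms unfolding eulerian_def by auto
  have ne: "ws \<noteq> []" and hl: "hd ws = last ws" and dist: "distinct (walk_edges ws)"
    and se: "set (walk_edges ws) = {{u, v} | u v. u \<in> V \<and> v \<in> V \<and> E u v}"
    and succ: "successively E ws"
    using ws unfolding eulerian_circuit_def walk_edges_map successively_conv_nth by auto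
  have "even (card {ed \<in> set (walk_edges ws). v \<in> ed} + (if v = hd ws then 1 else 0) + (if v = last ws then 1 else 0))"
    using parity[OF ne succ assms(3) dist] .
  then have "even (card {ed \<in> set (walk_edges ws). v \<in> ed})" using hl by (cases "v = hd ws"; simp)
  then show ?thesis using se deg_card[OF assms(4) assms(2)] by simp
qed


definition trail :: "'a set \<Rightarrow> ('a \<Rightarrow> 'a \<Rightarrow> bool) \<Rightarrow> 'a list \<Rightarrow> bool" where
  "trail V E T \<longleftrightarrow> T \<noteq> [] \<and> set T \<subseteq> V \<and> successively E T \<and> distinct (walk_edges T)"

lemma trail_snoc:
  assumes "trail V E T" "E (last T) y" "y \<in> V" "{last T, y} \<notin> set (walk_edges T)"
  shows "trail V E (T @ [y])" "set (walk_edges (T @ [y])) = insert {last T, y} (set (walk_edges T))"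
  using assms unfolding trail_def by (auto simp: walk_edges_snoc successively_append_iff)

lemma trail_rotate:
  assumes "trail V E T" "hd T = last T" "n < length T"
  shows "\<exists>T'. trail V E T' \<and> hd T' = T ! n \<and> last T' = T ! n \<and> length T' = length T \<and>
     set T' = set T \<and> set (walk_edges T') = set (walk_edges T)"
  using assms
proof (induction n arbitrary: T)
  case 0
  then show ?case by (auto simp: hd_conv_nth trail_def)
next
  case (Suc n)
  then obtain a r where T: "T = a # r" and rne: "r \<noteq> []"
    by (cases T; cases "tl T") auto
  have lr: "last r = a" using Suc.prems(2) T rne by simp
  have Ea: "E a (hd r)" using Suc.prems(1) T rne unfolding trail_def
    by (cases r) auto
  have we: "walk_edges T = {a, hd r} # walk_edges r" using T rne by (cases r) auto
  define T1 where "T1 = r @ [hd r]"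
  have we1: "walk_edges T1 = walk_edges r @ [{a, hd r}]"
    using rne lr by (simp add: T1_def walk_edges_snoc)
  have "trail V E T1"
    using Suc.prems(1) T rne lr Ea we we1 unfolding trail_def T1_def
    by (auto simp: successively_append_iff successively_Cons)
  moreover have "hd T1 = last T1" using rne by (simp add: T1_def)
  moreover have "n < length T1" using Suc.prems(3) T by (simp add: T1_def)
  ultimately obtain T' where T': "trail V E T' \<and> hd T' = T1 ! n \<and> last T' = T1 ! n \<and> length T' = length T1 \<and>
     set T' = set T1 \<and> set (walk_edges T') = set (walk_edges T1)"
    using Suc.IH by blast
  have "T1 ! n = T ! Suc n" using Suc.prems(3) T by (simp add: T1_def nth_append)
  moreover have "length T1 = length T" using T by (simp add: T1_def)
  moreover have "set T1 = set T" using T rne lr by (auto simp: T1_def)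
  moreover have "set (walk_edges T1) = set (walk_edges T)" using we we1 by auto
  ultimately show ?case using T' by metis
qed

lemma euler_exists:
  assumes fin: "finite V" and c: "c \<in> V" and inV: "\<forall>x y. E x y \<longrightarrow> x \<in> V \<and> y \<in> V"
    and sym: "\<forall>x y. E x y \<longrightarrow> E y x" and irr: "\<forall>x. \<not> E x x"
    and univ: "\<forall>x\<in>V-{c}. E c x" and ev: "\<forall>v\<in>V. even (card {y\<in>V. E v y})"
  shows "eulerian V E"
proof -
  define Edges where "Edges = {{u, v} | u v. u \<in> V \<and> v \<in> V \<and> E u v}"
  have finE: "finite Edges"
    by (rule finite_subset[of _ "Pow V"]) (auto simp: Edges_def fin)
  have bound: "length T < card Edges + 2" if "trail V E T" for T
  proof -
    have "set (walk_edges T) \<subseteq> Edges"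
      using that walk_edges_Edges[of E T V] unfolding trail_def Edges_def by auto
    then have "card (set (walk_edges T)) \<le> card Edges" using finE by (rule card_mono[rotated])
    moreover have "card (set (walk_edges T)) = length T - 1"
      using that distinct_card walk_edges_length unfolding trail_def by metis
    ultimately show ?thesis by linarith
  qed
  have P0: "trail V E [c] \<and> c \<in> set [c]" using c by (simp add: trail_def)
  obtain T where PT: "trail V E T \<and> c \<in> set T"
    and max: "\<forall>T'. trail V E T' \<and> c \<in> set T' \<longrightarrow> length T' \<le> length T"
    using ex_has_greatest_nat[of "\<lambda>T. trail V E T \<and> c \<in> set T" "[c]" length "card Edges + 2"] P0 bound
    by blast
  have Ttr: "trail V E T" and cT: "c \<in> set T" using PT by auto
  have ne: "T \<noteq> []" and sV: "set T \<subseteq> V" and succ: "successively E T" and dist: "distinct (walk_edges T)"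
    using Ttr unfolding trail_def by auto
  have sub: "set (walk_edges T) \<subseteq> Edges"
    using walk_edges_Edges[OF succ sV] unfolding Edges_def .
  have noext: False if "E (last T) y" "{last T, y} \<notin> set (walk_edges T)" for y
  proof -
    have "y \<in> V" using that inV by blast
    from trail_snoc(1)[OF Ttr that(1) this that(2)] cT max show False
      by (metis Un_iff le_Suc_eq length_append_singleton not_less_eq_eq set_append)
  qed
  have closed: "hd T = last T"
  proof (rule ccontr)
    assume hl: "hd T \<noteq> last T"
    define w where "w = last T"
    have wV: "w \<in> V" using ne sV unfolding w_def by auto
    have "even (card {ed \<in> set (walk_edges T). w \<in> ed} + (if w = hd T then 1 else 0) + (if w = last T then 1 else 0))"
      using parity[OF ne succ irr dist] .
    then have odd1: "odd (card {ed \<in> set (walk_edges T). w \<in> ed})" using hl unfolding w_def by simp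
    have "{ed \<in> set (walk_edges T). w \<in> ed} = {ed \<in> Edges. w \<in> ed}"
    proof
      show "{ed \<in> set (walk_edges T). w \<in> ed} \<subseteq> {ed \<in> Edges. w \<in> ed}" using sub by auto
      show "{ed \<in> Edges. w \<in> ed} \<subseteq> {ed \<in> set (walk_edges T). w \<in> ed}"
      proof
        fix ed assume "ed \<in> {ed \<in> Edges. w \<in> ed}"
        then obtain u u' where ed: "ed = {u, u'}" "E u u'" "w \<in> ed" unfolding Edges_def by auto
        then obtain y where "ed = {w, y}" "E w y"
          using sym by (metis empty_iff insertE insert_commute)
        then show "ed \<in> {ed \<in> set (walk_edges T). w \<in> ed}"
          using noext unfolding w_def by blast
      qed
    qed
    then have "odd (card {y\<in>V. E w y})"
      using odd1 deg_card[OF wV sym] unfolding Edges_def by simp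
    then show False using ev wV by blast
  qed
  have cover: "set (walk_edges T) = Edges"
  proof (rule ccontr)
    assume "set (walk_edges T) \<noteq> Edges"
    then obtain ed where "ed \<in> Edges" "ed \<notin> set (walk_edges T)" using sub by blast
    then obtain x y where ed: "ed = {x, y}" "E x y" "{x, y} \<notin> set (walk_edges T)"
      unfolding Edges_def by auto
    have "\<exists>u z. u \<in> set T \<and> E u z \<and> {u, z} \<notin> set (walk_edges T)"
    proof (cases "x = c")
      case True then show ?thesis using ed cT by blast
    next
      case xc: False
      show ?thesis
      proof (cases "y = c")
        case True then show ?thesis using ed cT sym by (metis insert_commute)
      next
        case False
        have "E c x" using univ xc ed(2) inV by blast
        show ?thesis
        proof (cases "{c, x} \<in> set (walk_edges T)")
          case True
          then have "x \<in> set T" using walk_edges_subset by blast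
          then show ?thesis using ed by blast
        next
          case False then show ?thesis using \<open>E c x\<close> cT by blast
        qed
      qed
    qed
    then obtain u z where uz: "u \<in> set T" "E u z" "{u, z} \<notin> set (walk_edges T)" by blast
    then obtain n where n: "n < length T" "T ! n = u" by (meson in_set_conv_nth)
    obtain T' where T': "trail V E T'" "hd T' = u" "last T' = u" "length T' = length T"
      "set T' = set T" "set (walk_edges T') = set (walk_edges T)"
      using trail_rotate[OF Ttr closed n(1)] n(2) by blast
    have "z \<in> V" using uz inV by blast
    have "trail V E (T' @ [z])"
      using trail_snoc(1)[OF T'(1) _ \<open>z \<in> V\<close>] T' uz by simp
    moreover have "c \<in> set (T' @ [z])" using cT T' by simp
    ultimately have "length (T' @ [z]) \<le> length T" using max by blast
    then show False using T' by simp
  qed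
  have "eulerian_circuit V E T"
    unfolding eulerian_circuit_def walk_edges_map
    using ne sV closed dist cover succ unfolding Edges_def successively_conv_nth by auto
  then show ?thesis unfolding eulerian_def by blast
qed



lemma (in group) comm_central:
  assumes "u \<in> carrier G" "v \<in> carrier G" "k \<in> carrier G" "u \<otimes> v = v \<otimes> u" "k \<otimes> v = v \<otimes> k"
  shows "(u \<otimes> k) \<otimes> v = v \<otimes> (u \<otimes> k)"
proof -
  have "(u \<otimes> k) \<otimes> v = u \<otimes> (k \<otimes> v)" using assms by (simp add: m_assoc)
  also have "\<dots> = u \<otimes> (v \<otimes> k)" by (simp only: assms(5))
  also have "\<dots> = (u \<otimes> v) \<otimes> k" by (simp only: m_assoc assms(1-3))
  also have "\<dots> = (v \<otimes> u) \<otimes> k" by (simp only: assms(4))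
  also have "\<dots> = v \<otimes> (u \<otimes> k)" by (simp only: m_assoc assms(1-3))
  finally show ?thesis .
qed

lemma (in group) centralizer_subgroup:
  assumes "a0 \<in> carrier G"
  shows "subgroup {b \<in> carrier G. a0 \<otimes> b = b \<otimes> a0} G"
proof (rule subgroupI)
  show "{b \<in> carrier G. a0 \<otimes> b = b \<otimes> a0} \<subseteq> carrier G" by auto
  show "{b \<in> carrier G. a0 \<otimes> b = b \<otimes> a0} \<noteq> {}" using assms by (auto intro!: exI[of _ \<one>])
next
  fix b assume b: "b \<in> {b \<in> carrier G. a0 \<otimes> b = b \<otimes> a0}"
  then have bc: "b \<in> carrier G" and e: "a0 \<otimes> b = b \<otimes> a0" by auto
  have "inv b \<otimes> a0 = inv b \<otimes> (a0 \<otimes> b) \<otimes> inv b" using bc assms by (simp add: m_assoc)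
  also have "\<dots> = inv b \<otimes> (b \<otimes> a0) \<otimes> inv b" using e by simp
  also have "\<dots> = a0 \<otimes> inv b" using bc assms by (simp add: m_assoc[symmetric])
  finally show "inv b \<in> {b \<in> carrier G. a0 \<otimes> b = b \<otimes> a0}" using bc by simp
next
  fix b c assume "b \<in> {b \<in> carrier G. a0 \<otimes> b = b \<otimes> a0}" "c \<in> {b \<in> carrier G. a0 \<otimes> b = b \<otimes> a0}"
  then have bc: "b \<in> carrier G" "c \<in> carrier G" and e: "a0 \<otimes> b = b \<otimes> a0" "a0 \<otimes> c = c \<otimes> a0" by auto
  have "a0 \<otimes> (b \<otimes> c) = (a0 \<otimes> b) \<otimes> c" using bc assms by (simp add: m_assoc)
  also have "\<dots> = b \<otimes> (a0 \<otimes> c)" using bc assms e by (simp add: m_assoc)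
  also have "\<dots> = (b \<otimes> c) \<otimes> a0" using bc assms e by (simp add: m_assoc)
  finally show "b \<otimes> c \<in> {b \<in> carrier G. a0 \<otimes> b = b \<otimes> a0}" using bc by simp
qed


theorem theorem3p4:
  fixes G :: "'a monoid" and H :: "'b monoid" and f :: "'b \<Rightarrow> 'a"
  assumes "group G" and "finite (carrier G)" and "schur_cover G H f"
  shows "eulerian (carrier G) (deep_adj G H f) \<longleftrightarrow> odd (card (carrier G))"
proof -
  from assms(3) have st: "stem_extension G H f" by (simp add: schur_cover_def)
  then have gH: "group H" and hom: "f \<in> hom H G" and surj: "f ` carrier H = carrier G"
    and ker: "kernel H G f \<subseteq> grp_center H"
    unfolding stem_extension_def by auto
  interpret gh: group_hom H G f using gH assms(1) hom by (simp add: group_hom_def group_hom_axioms_def)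
  have central: "k \<otimes>\<^bsub>H\<^esub> b = b \<otimes>\<^bsub>H\<^esub> k"
    if "k \<in> carrier H" "f k = \<one>\<^bsub>G\<^esub>" "b \<in> carrier H" for k b
    using ker that unfolding kernel_def grp_center_def by auto
  have inV: "\<forall>x y. deep_adj G H f x y \<longrightarrow> x \<in> carrier G \<and> y \<in> carrier G"
    by (simp add: deep_adj_def)
  have sym: "\<forall>x y. deep_adj G H f x y \<longrightarrow> deep_adj G H f y x"
    unfolding deep_adj_def by metis
  have irr: "\<forall>x. \<not> deep_adj G H f x x" by (simp add: deep_adj_def)
  have univ: "\<forall>x\<in>carrier G - {\<one>\<^bsub>G\<^esub>}. deep_adj G H f \<one>\<^bsub>G\<^esub> x"
    unfolding deep_adj_def using central by auto
  have deg1: "{y \<in> carrier G. deep_adj G H f \<one>\<^bsub>G\<^esub> y} = carrier G - {\<one>\<^bsub>G\<^esub>}"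
    using univ by (auto simp: deep_adj_def)
  have decomp: "f (inv\<^bsub>H\<^esub> a0 \<otimes>\<^bsub>H\<^esub> a) = \<one>\<^bsub>G\<^esub> \<and> a = a0 \<otimes>\<^bsub>H\<^esub> (inv\<^bsub>H\<^esub> a0 \<otimes>\<^bsub>H\<^esub> a)"
    if "a \<in> carrier H" "a0 \<in> carrier H" "f a = f a0" for a a0
    using that by (simp add: gh.G.m_assoc[symmetric])
  have commute: "a \<otimes>\<^bsub>H\<^esub> b' = b' \<otimes>\<^bsub>H\<^esub> a"
    if "a0 \<in> carrier H" "b \<in> carrier H" "a0 \<otimes>\<^bsub>H\<^esub> b = b \<otimes>\<^bsub>H\<^esub> a0"
      "a \<in> carrier H" "b' \<in> carrier H" "f a = f a0" "f b' = f b" for a0 b a b'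
  proof -
    define k where "k = inv\<^bsub>H\<^esub> a0 \<otimes>\<^bsub>H\<^esub> a"
    have k: "k \<in> carrier H" "f k = \<one>\<^bsub>G\<^esub>" "a = a0 \<otimes>\<^bsub>H\<^esub> k"
      using decomp[of a a0] that unfolding k_def by auto
    have 1: "a \<otimes>\<^bsub>H\<^esub> b = b \<otimes>\<^bsub>H\<^esub> a"
      using gh.G.comm_central[of a0 b k] k that central by simp
    define k' where "k' = inv\<^bsub>H\<^esub> b \<otimes>\<^bsub>H\<^esub> b'"
    have k': "k' \<in> carrier H" "f k' = \<one>\<^bsub>G\<^esub>" "b' = b \<otimes>\<^bsub>H\<^esub> k'"
      using decomp[of b' b] that unfolding k'_def by auto
    have "b' \<otimes>\<^bsub>H\<^esub> a = a \<otimes>\<^bsub>H\<^esub> b'"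
      using gh.G.comm_central[of b a k'] k' 1 that central by simp
    then show ?thesis by simp
  qed
  have deg_even: "even (card {y \<in> carrier G. deep_adj G H f x y})"
    if odd: "odd (card (carrier G))" and x: "x \<in> carrier G" for x
  proof -
    have "x \<in> f ` carrier H" using surj x by simp
    then obtain a0 where a0': "x = f a0" "a0 \<in> carrier H" by (rule imageE)
    then have a0: "a0 \<in> carrier H" "f a0 = x" by simp_all
    define C where "C = {b \<in> carrier H. a0 \<otimes>\<^bsub>H\<^esub> b = b \<otimes>\<^bsub>H\<^esub> a0}"
    have "subgroup C H" unfolding C_def by (rule gh.G.centralizer_subgroup[OF a0(1)])
    then have sS: "subgroup (f ` C) G" by (rule gh.subgroup_img_is_subgroup)
    have eq: "{y \<in> carrier G. deep_adj G H f x y} = f ` C - {x}"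
    proof
      show "{y \<in> carrier G. deep_adj G H f x y} \<subseteq> f ` C - {x}"
      proof
        fix y assume y: "y \<in> {y \<in> carrier G. deep_adj G H f x y}"
        then have "y \<in> f ` carrier H" using surj by simp
        then obtain b where b': "y = f b" "b \<in> carrier H" by (rule imageE)
        then have b: "b \<in> carrier H" "f b = y" by simp_all
        have "a0 \<otimes>\<^bsub>H\<^esub> b = b \<otimes>\<^bsub>H\<^esub> a0" using y b a0 unfolding deep_adj_def by blast
        then have "b \<in> C" using b unfolding C_def by simp
        then show "y \<in> f ` C - {x}" using b y unfolding deep_adj_def by auto
      qed
      show "f ` C - {x} \<subseteq> {y \<in> carrier G. deep_adj G H f x y}"
      proof
        fix y assume y: "y \<in> f ` C - {x}"
        then obtain b where b: "b \<in> C" "f b = y" "y \<noteq> x" by blast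
        have bH: "b \<in> carrier H" and bc: "a0 \<otimes>\<^bsub>H\<^esub> b = b \<otimes>\<^bsub>H\<^esub> a0" using b unfolding C_def by auto
        have yG: "y \<in> carrier G" using b bH by auto
        have "\<forall>a\<in>carrier H. \<forall>b'\<in>carrier H. f a = x \<longrightarrow> f b' = y \<longrightarrow> a \<otimes>\<^bsub>H\<^esub> b' = b' \<otimes>\<^bsub>H\<^esub> a"
        proof (intro ballI impI)
          fix a b' assume "a \<in> carrier H" "b' \<in> carrier H" "f a = x" "f b' = y"
          then show "a \<otimes>\<^bsub>H\<^esub> b' = b' \<otimes>\<^bsub>H\<^esub> a"
            using commute[OF a0(1) bH bc, of a b'] a0(2) b(2) by metis
        qed
        then show "y \<in> {y \<in> carrier G. deep_adj G H f x y}"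
          unfolding deep_adj_def using yG x b(3) by blast
      qed
    qed
    have xS: "x \<in> f ` C" using a0 unfolding C_def by (intro image_eqI[of _ f a0]) auto
    have finS: "finite (f ` C)" by (rule finite_subset[OF subgroup.subset[OF sS] assms(2)])
    have "card (rcosets\<^bsub>G\<^esub> (f ` C)) * card (f ` C) = order G"
      using gh.H.lagrange[OF sS] .
    then have "card (f ` C) dvd card (carrier G)" unfolding order_def by (metis dvd_triv_right)
    then have "odd (card (f ` C))" using odd by (metis dvd_trans even_two_times_div_two dvd_triv_left)
    then show ?thesis using eq xS finS by (simp add: card_Diff_singleton)
  qed
  show ?thesis
  proof
    assume eul: "eulerian (carrier G) (deep_adj G H f)"
    have "even (card {y \<in> carrier G. deep_adj G H f \<one>\<^bsub>G\<^esub> y})"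
      by (rule eulerian_even[OF eul sym irr]) simp
    then have "even (card (carrier G) - 1)" using deg1 assms(2) by (simp add: card_Diff_singleton)
    moreover have "card (carrier G) \<ge> 1" using assms(2) gh.H.one_closed
      by (metis card_0_eq empty_iff less_one not_less)
    ultimately show "odd (card (carrier G))" by presburger
  next
    assume "odd (card (carrier G))"
    then show "eulerian (carrier G) (deep_adj G H f)"
      using euler_exists[OF assms(2) gh.H.one_closed inV sym irr univ] deg_even by blast
  qed
qed

end
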